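(* Let $\alpha\geq2$ be an ordinal. If $\mathfrak A\in TA_\alpha$ is atomic (its Boolean reduct is atomic), then $\mathfrak A$ is completely representable: there are a permutable set $V$ (for infinite $\alpha$, a permutable subset of a weak space) and an injective homomorphism $f:\mathfrak A\to\wp(V)$ such that $f(\prod Y)=\bigcap_{y\in Y}f(y)$ for every $Y\subseteq A$ for which $\prod Y$ exists; moreover $\bigcup_{x\in\mathrm{At}\mathfrak A}f(x)=V$.
   Context: $TA_\alpha=\mathbf{Mod}(\Sigma_\alpha)$, where $\Sigma_\alpha$ (signature $\wedge,-,s_{ij}$ for $i\neq j<\alpha$) consists of the Boolean algebra axioms, the equations saying each $s_{ij}$ is a Boolean endomorphism, and $t_1(x)=t_2(x)$ for all words $t_1,t_2$ in the $s_{ij}$ whose associated compositions of transpositions $[i,j]$ coincide. A weak space is ${}^\alpha U^{(p)}=\{s\in{}^\alpha U:|\{i:s_i\neq p_i\}|<\omega\}$ for a set $U$ and $p\in{}^\alpha U$. A set $V$ of sequences is permutable if $s\circ[i,j]\in V$ for all $s\in V$, $i\neq j<\alpha$. $\wp(V)=\langle\mathcal P(V);\cap,-,S_{ij}\rangle$ with complement relative to $V$ and $S_{ij}(Y)=\{q\in V:q\circ[i,j]\in Y\}$. $\mathrm{At}\mathfrak A$ is the set of atoms. *)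

theory Defs
  imports Main "HOL-Combinatorics.Transposition"
begin

text \<open>Words in the substitution operators s_ij, represented as lists of index pairs.\<close>

definition word_ok :: "('i \<times> 'i) list \<Rightarrow> bool" where
  "word_ok w \<longleftrightarrow> (\<forall>(i,j)\<in>set w. i \<noteq> j)"

definition word_term :: "('i \<Rightarrow> 'i \<Rightarrow> 'a \<Rightarrow> 'a) \<Rightarrow> ('i \<times> 'i) list \<Rightarrow> 'a \<Rightarrow> 'a" where
  "word_term s w = foldr (\<lambda>(i,j) g. s i j \<circ> g) w id"

definition word_perm :: "('i \<times> 'i) list \<Rightarrow> 'i \<Rightarrow> 'i" where
  "word_perm w = foldr (\<lambda>(i,j) g. transpose i j \<circ> g) w id"

text \<open>TA_alpha = Mod(Sigma_alpha). The Boolean reduct is the ambient type 'a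
  (class boolean_algebra, meet = inf, complement = uminus); s i j is the operation s_ij.\<close>

definition TA :: "('i \<Rightarrow> 'i \<Rightarrow> 'a::boolean_algebra \<Rightarrow> 'a) \<Rightarrow> bool" where
  "TA s \<longleftrightarrow>
     (\<forall>i j. i \<noteq> j \<longrightarrow> (\<forall>x y. s i j (inf x y) = inf (s i j x) (s i j y)) \<and> (\<forall>x. s i j (- x) = - s i j x))
   \<and> (\<forall>w1 w2. word_ok w1 \<and> word_ok w2 \<and> word_perm w1 = word_perm w2
        \<longrightarrow> (\<forall>x. word_term s w1 x = word_term s w2 x))"

definition is_atom :: "'a::boolean_algebra \<Rightarrow> bool" where
  "is_atom a \<longleftrightarrow> a \<noteq> bot \<and> (\<forall>y. y \<le> a \<longrightarrow> y = bot \<or> y = a)"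

definition atomic_ba :: "'a::boolean_algebra itself \<Rightarrow> bool" where
  "atomic_ba _ \<longleftrightarrow> (\<forall>x::'a. x \<noteq> bot \<longrightarrow> (\<exists>a. is_atom a \<and> a \<le> x))"

definition is_prod :: "'a::boolean_algebra set \<Rightarrow> 'a \<Rightarrow> bool" where
  "is_prod Y m \<longleftrightarrow> (\<forall>y\<in>Y. m \<le> y) \<and> (\<forall>z. (\<forall>y\<in>Y. z \<le> y) \<longrightarrow> z \<le> m)"

definition permutable :: "('i \<Rightarrow> 'u) set \<Rightarrow> bool" where
  "permutable V \<longleftrightarrow> (\<forall>q\<in>V. \<forall>i j. i \<noteq> j \<longrightarrow> q \<circ> transpose i j \<in> V)"

definition weak_space :: "'u set \<Rightarrow> ('i \<Rightarrow> 'u) \<Rightarrow> ('i \<Rightarrow> 'u) set" where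
  "weak_space U p = {q. (\<forall>i. q i \<in> U) \<and> finite {i. q i \<noteq> p i}}"

definition Subst :: "('i \<Rightarrow> 'u) set \<Rightarrow> 'i \<Rightarrow> 'i \<Rightarrow> ('i \<Rightarrow> 'u) set \<Rightarrow> ('i \<Rightarrow> 'u) set" where
  "Subst V i j Y = {q\<in>V. q \<circ> transpose i j \<in> Y}"

definition hom_wp :: "('i \<Rightarrow> 'i \<Rightarrow> 'a::boolean_algebra \<Rightarrow> 'a) \<Rightarrow> ('i \<Rightarrow> 'u) set \<Rightarrow> ('a \<Rightarrow> ('i \<Rightarrow> 'u) set) \<Rightarrow> bool" where
  "hom_wp s V f \<longleftrightarrow> (\<forall>x. f x \<subseteq> V)
     \<and> (\<forall>x y. f (inf x y) = f x \<inter> f y)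
     \<and> (\<forall>x. f (- x) = V - f x)
     \<and> (\<forall>i j x. i \<noteq> j \<longrightarrow> f (s i j x) = Subst V i j (f x))"

end

theory Submission
  imports Defs
begin

lemma wp_nil[simp]: "word_perm [] = id" by (simp add: word_perm_def)
lemma wp_cons[simp]: "word_perm ((i,j)#w) = transpose i j \<circ> word_perm w" by (simp add: word_perm_def)
lemma wt_nil[simp]: "word_term s [] = id" by (simp add: word_term_def)
lemma wt_cons[simp]: "word_term s ((i,j)#w) = s i j \<circ> word_term s w" by (simp add: word_term_def)

lemma wp_append: "word_perm (w @ v) = word_perm w \<circ> word_perm v"
  by (induction w) (auto simp: comp_assoc)

lemma wp_bij: "bij (word_perm w)"
proof (induction w)
  case Nil then show ?case by (simp add: id_def[symmetric])
next
  case (Cons x w)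
  obtain i j where x: "x = (i,j)" by (cases x)
  have "bij (transpose i j \<circ> word_perm w)" using bij_comp[OF Cons.IH bij_transpose] .
  then show ?case by (simp only: x wp_cons)
qed

lemma wp_rev: "word_perm (rev w) \<circ> word_perm w = id"
proof (induction w)
  case Nil then show ?case by simp
next
  case (Cons x w)
  obtain i j where x: "x = (i,j)" by (cases x)
  show ?case
  proof
    fix k
    have tt: "transpose i j (transpose i j y) = y" for y
      by (metis comp_apply id_apply transpose_comp_involutory)
    have "(word_perm (rev (x#w)) \<circ> word_perm (x#w)) k
      = word_perm (rev w) (transpose i j (transpose i j (word_perm w k)))"
      by (simp add: x wp_append)
    also have "\<dots> = id k" using Cons by (simp add: tt fun_eq_iff)
    finally show "(word_perm (rev (x#w)) \<circ> word_perm (x#w)) k = id k" .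
  qed
qed

lemma wp_finite: "finite {k. word_perm w k \<noteq> k}"
proof (induction w)
  case Nil then show ?case by simp
next
  case (Cons x w)
  obtain i j where x: "x = (i,j)" by (cases x)
  have "{k. word_perm (x#w) k \<noteq> k} \<subseteq> {k. word_perm w k \<noteq> k} \<union> {i,j}"
    by (auto simp: x transpose_def)
  then show ?case using Cons finite_subset by blast
qed

lemma wok_rev: "word_ok w \<Longrightarrow> word_ok (rev w)" by (simp add: word_ok_def)
lemma wok_snoc: "word_ok w \<Longrightarrow> i \<noteq> j \<Longrightarrow> word_ok (w @ [(i,j)])" by (auto simp: word_ok_def)

lemma TA_inv: assumes "TA s" "i \<noteq> j" shows "s i j (s i j x) = x"
proof -
  have "word_ok [(i,j),(i,j)]" "word_ok ([]::('i\<times>'i) list)" using assms(2) by (auto simp: word_ok_def)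
  moreover have "word_perm [(i,j),(i,j)] = word_perm []" by simp
  ultimately have "word_term s [(i,j),(i,j)] x = word_term s [] x" using assms(1) unfolding TA_def by blast
  then show ?thesis by simp
qed

lemma TA_mono: assumes "TA s" "i \<noteq> j" "x \<le> y" shows "s i j x \<le> s i j y"
proof -
  have "s i j x = s i j (inf x y)" using assms(3) by (simp add: inf_absorb1)
  also have "\<dots> = inf (s i j x) (s i j y)" using assms(1,2) unfolding TA_def by blast
  finally show ?thesis by (metis inf.orderI)
qed

lemma TA_bot: assumes "TA s" "i \<noteq> j" shows "s i j bot = bot"
proof -
  have "s i j (inf x (- x)) = inf (s i j x) (- s i j x)" for x using assms unfolding TA_def by metis
  then show ?thesis by simp
qed

lemma TA_adj: assumes "TA s" "i \<noteq> j" shows "(a \<le> s i j x) = (s i j a \<le> x)"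
  by (metis TA_inv TA_mono assms)

lemma TA_atom: assumes "TA s" "i \<noteq> j" "is_atom a" shows "is_atom (s i j a)"
  unfolding is_atom_def
proof (intro conjI allI impI)
  show "s i j a \<noteq> bot" using assms by (metis TA_bot TA_inv is_atom_def)
next
  fix y assume "y \<le> s i j a"
  then have "s i j y \<le> a" using TA_adj[OF assms(1,2)] by simp
  then have "s i j y = bot \<or> s i j y = a" using assms(3) unfolding is_atom_def by blast
  then show "y = bot \<or> y = s i j a" by (metis TA_bot TA_inv assms(1,2))
qed

lemma wt_atom: assumes "TA s" "word_ok w" "is_atom a" shows "is_atom (word_term s w a)"
  using assms(2)
proof (induction w)
  case Nil then show ?case using assms by simp
next
  case (Cons x w)
  obtain i j where x: "x = (i,j)" by (cases x)
  have "i \<noteq> j" "word_ok w" using Cons.prems by (auto simp: x word_ok_def)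
  then show ?case using Cons TA_atom assms(1) by (simp add: x)
qed

lemma atom_compl: "is_atom a \<Longrightarrow> (a \<le> - x) = (\<not> a \<le> x)"
  by (metis inf.absorb_iff2 inf.cobounded1 inf_commute inf_shunt is_atom_def le_bot)

lemma surjcomp_wp: "g1 \<circ> word_perm w = g2 \<circ> word_perm w \<Longrightarrow> g1 = g2"
proof
  fix m assume h: "g1 \<circ> word_perm w = g2 \<circ> word_perm w"
  have "\<exists>k. m = word_perm w k" by (rule surjD[OF bij_is_surj[OF wp_bij]])
  then obtain k where k: "m = word_perm w k" ..
  show "g1 m = g2 m" using fun_cong[OF h, of k] k by simp
qed

definition bseq :: "'a::boolean_algebra \<Rightarrow> 'i \<Rightarrow> ('a \<times> 'i \<times> nat) set" where
  "bseq a = (\<lambda>k. {(if k = undefined then a else bot, k, 0)})"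

lemma uniq:
  fixes w w' :: "('i \<times> 'i) list" and a a' :: "'a::boolean_algebra"
  assumes "TA s" "bseq a \<circ> word_perm w = bseq a' \<circ> word_perm w'" "word_ok w" "word_ok w'"
  shows "a = a' \<and> word_term s (rev w) a = word_term s (rev w') a'"
proof -
  have pe: "word_perm w = word_perm w'"
  proof
    fix k
    have "bseq a (word_perm w k) = bseq a' (word_perm w' k)" using assms(2) by (metis comp_apply)
    then show "word_perm w k = word_perm w' k" by (simp add: bseq_def)
  qed
  have "surj (word_perm w)" using bij_is_surj[OF wp_bij] .
  have "(bseq a :: 'i \<Rightarrow> _) = bseq a'" using surjcomp_wp[of "bseq a" w "bseq a'"] assms(2) pe by simp
  then have "bseq a (undefined::'i) = bseq a' undefined" by simp
  then have aa: "a = a'" unfolding bseq_def by simp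
  have "word_perm (rev w) = word_perm (rev w')"
    using surjcomp_wp[of "word_perm (rev w)" w "word_perm (rev w')"] wp_rev[of w] wp_rev[of w'] pe by simp
  moreover have "word_ok (rev w)" "word_ok (rev w')" using assms(3,4) by (simp_all add: wok_rev)
  ultimately have "word_term s (rev w) x = word_term s (rev w') x" for x
    using assms(1) unfolding TA_def by blast
  then show ?thesis using aa by simp
qed

theorem theorem3p22:
  fixes s :: "'i \<Rightarrow> 'i \<Rightarrow> 'a::boolean_algebra \<Rightarrow> 'a"
  assumes alpha2: "\<exists>i j :: 'i. i \<noteq> j"
    and TA: "TA s"
    and atomic: "atomic_ba TYPE('a)"
  shows "\<exists>(V :: ('i \<Rightarrow> ('a \<times> 'i \<times> nat) set) set) (f :: 'a \<Rightarrow> ('i \<Rightarrow> ('a \<times> 'i \<times> nat) set) set).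
           permutable V
         \<and> (infinite (UNIV :: 'i set) \<longrightarrow> (\<exists>U p. (\<forall>i. p i \<in> U) \<and> V \<subseteq> weak_space U p))
         \<and> hom_wp s V f \<and> inj f
         \<and> (\<forall>Y m. is_prod Y m \<longrightarrow> f m = V \<inter> (\<Inter>y\<in>Y. f y))
         \<and> (\<Union>x\<in>{x. is_atom x}. f x) = V"
proof -
  define V :: "('i \<Rightarrow> ('a \<times> 'i \<times> nat) set) set" where
    "V = {bseq a \<circ> word_perm w | a w. is_atom a \<and> word_ok w}"
  define f :: "'a \<Rightarrow> ('i \<Rightarrow> ('a \<times> 'i \<times> nat) set) set" where
    "f x = {q. \<exists>a w. is_atom a \<and> word_ok w \<and> q = bseq a \<circ> word_perm w \<and> word_term s (rev w) a \<le> x}" for x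
  have key: "bseq a \<circ> word_perm w \<in> f x \<longleftrightarrow> word_term s (rev w) a \<le> x"
    if "is_atom a" "word_ok w" for a w x
  proof
    assume "bseq a \<circ> word_perm w \<in> f x"
    then obtain a' w' where "word_ok w'" "bseq a \<circ> word_perm w = bseq a' \<circ> word_perm w'"
      "word_term s (rev w') a' \<le> x" unfolding f_def by blast
    then show "word_term s (rev w) a \<le> x" using uniq[OF TA _ that(2)] by metis
  qed (unfold f_def, use that in blast)
  have fV: "f x \<subseteq> V" for x unfolding f_def V_def by blast
  have Vcases: "q \<in> V \<Longrightarrow> (\<And>a w. is_atom a \<Longrightarrow> word_ok w \<Longrightarrow> q = bseq a \<circ> word_perm w \<Longrightarrow> P) \<Longrightarrow> P" for q P
    unfolding V_def by blast
  have perm: "permutable V"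
    unfolding permutable_def
  proof (intro ballI allI impI)
    fix q i j assume "q \<in> V" "(i::'i) \<noteq> j"
    then obtain a w where "is_atom a" "word_ok w" "q = bseq a \<circ> word_perm w" using Vcases by metis
    then have "q \<circ> transpose i j = bseq a \<circ> word_perm (w @ [(i,j)])" "word_ok (w @ [(i,j)])"
      using \<open>i \<noteq> j\<close> by (auto simp: wp_append comp_assoc wok_snoc)
    then show "q \<circ> transpose i j \<in> V" using \<open>is_atom a\<close> unfolding V_def by blast
  qed
  have weak: "V \<subseteq> weak_space UNIV (\<lambda>k. {(bot, k, 0)})"
  proof
    fix q assume "q \<in> V"
    then obtain a w where q: "q = bseq a \<circ> word_perm w" using Vcases by metis
    have "{k. q k \<noteq> {(bot, k, 0)}} \<subseteq> {k. word_perm w k \<noteq> k} \<union> {undefined}"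
      by (auto simp: q bseq_def)
    then show "q \<in> weak_space UNIV (\<lambda>k. {(bot, k, 0)})"
      unfolding weak_space_def using wp_finite[of w] finite_subset by blast
  qed
  have hom: "hom_wp s V f"
    unfolding hom_wp_def
  proof (intro conjI allI impI)
    fix x show "f x \<subseteq> V" by (rule fV)
  next
    fix x y show "f (inf x y) = f x \<inter> f y"
    proof (intro equalityI subsetI)
      fix q assume q: "q \<in> f (inf x y)"
      then obtain a w where "is_atom a" "word_ok w" "q = bseq a \<circ> word_perm w" using fV Vcases by blast
      then show "q \<in> f x \<inter> f y" using key q by auto
    next
      fix q assume q: "q \<in> f x \<inter> f y"
      then obtain a w where "is_atom a" "word_ok w" "q = bseq a \<circ> word_perm w" using fV Vcases by blast
      then show "q \<in> f (inf x y)" using key q by auto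
    qed
  next
    fix x show "f (- x) = V - f x"
    proof (intro equalityI subsetI)
      fix q assume "q \<in> f (- x)"
      then obtain a w where "is_atom a" "word_ok w" "q = bseq a \<circ> word_perm w" using fV Vcases by blast
      note aw = this
      have at: "is_atom (word_term s (rev w) a)" using wt_atom[OF TA wok_rev[OF aw(2)] aw(1)] .
      have "word_term s (rev w) a \<le> - x" using key[OF aw(1,2)] \<open>q \<in> f (- x)\<close> aw(3) by simp
      then have "\<not> word_term s (rev w) a \<le> x" using atom_compl[OF at] by simp
      then have "q \<notin> f x" using key[OF aw(1,2)] aw(3) by simp
      then show "q \<in> V - f x" using fV \<open>q \<in> f (- x)\<close> by blast
    next
      fix q assume "q \<in> V - f x"
      then obtain a w where "is_atom a" "word_ok w" "q = bseq a \<circ> word_perm w" using Vcases by blast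
      note aw = this
      have at: "is_atom (word_term s (rev w) a)" using wt_atom[OF TA wok_rev[OF aw(2)] aw(1)] .
      have "\<not> word_term s (rev w) a \<le> x" using key[OF aw(1,2)] \<open>q \<in> V - f x\<close> aw(3) by simp
      then have "word_term s (rev w) a \<le> - x" using atom_compl[OF at] by simp
      then show "q \<in> f (- x)" using key[OF aw(1,2)] aw(3) by simp
    qed
  next
    fix i j x assume ij: "(i::'i) \<noteq> j"
    show "f (s i j x) = Subst V i j (f x)"
    proof (intro equalityI subsetI)
      fix q assume "q \<in> f (s i j x)"
      then obtain a w where aw: "is_atom a" "word_ok w" "q = bseq a \<circ> word_perm w" using fV Vcases by blast
      have q2: "q \<circ> transpose i j = bseq a \<circ> word_perm (w @ [(i,j)])" "word_ok (w @ [(i,j)])"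
        using ij aw by (auto simp: wp_append comp_assoc wok_snoc)
      have "word_term s (rev w) a \<le> s i j x" using key[OF aw(1,2)] aw(3) \<open>q \<in> f (s i j x)\<close> by simp
      then have "word_term s (rev (w @ [(i,j)])) a \<le> x" using TA_adj[OF TA ij] by simp
      then have "q \<circ> transpose i j \<in> f x" using key q2 aw by simp
      then show "q \<in> Subst V i j (f x)" using fV \<open>q \<in> f (s i j x)\<close> unfolding Subst_def by blast
    next
      fix q assume qs: "q \<in> Subst V i j (f x)"
      then have "q \<in> V" by (simp add: Subst_def)
      then obtain a w where aw: "is_atom a" "word_ok w" "q = bseq a \<circ> word_perm w" using Vcases by blast
      have q2: "q \<circ> transpose i j = bseq a \<circ> word_perm (w @ [(i,j)])" "word_ok (w @ [(i,j)])"
        using ij aw by (auto simp: wp_append comp_assoc wok_snoc)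
      have "q \<circ> transpose i j \<in> f x" using qs by (simp add: Subst_def)
      then have "word_term s (rev (w @ [(i,j)])) a \<le> x" using key[OF aw(1) q2(2)] q2(1) by simp
      then have "word_term s (rev w) a \<le> s i j x" using TA_adj[OF TA ij] by simp
      then show "q \<in> f (s i j x)" using key[OF aw(1,2)] aw(3) by simp
    qed
  qed
  have base: "bseq a \<in> f x \<longleftrightarrow> a \<le> x" if "is_atom a" for a x
    using key[OF that, of "[]" x] by (simp add: word_ok_def)
  have le: "x \<le> y" if "f x = f y" for x y
  proof (rule ccontr)
    assume "\<not> x \<le> y"
    then have "inf x (- y) \<noteq> bot" using inf_shunt by (metis double_compl)
    then obtain a where a: "is_atom a" "a \<le> inf x (- y)" using atomic unfolding atomic_ba_def by blast
    then have "bseq a \<in> f x" using base by simp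
    then have "bseq a \<in> f y" using that by simp
    then have "a \<le> y" using base a by blast
    moreover have "a \<le> - y" using a(2) by simp
    ultimately show False using atom_compl[OF a(1)] by simp
  qed
  have injf: "inj f" by (rule injI) (metis le antisym)
  have prod: "f m = V \<inter> (\<Inter>y\<in>Y. f y)" if "is_prod Y m" for Y m
  proof (intro equalityI subsetI)
    fix q assume "q \<in> f m"
    then obtain a w where aw: "is_atom a" "word_ok w" "q = bseq a \<circ> word_perm w" using fV Vcases by blast
    have "word_term s (rev w) a \<le> m" using key[OF aw(1,2)] aw(3) \<open>q \<in> f m\<close> by simp
    then have "\<forall>y\<in>Y. word_term s (rev w) a \<le> y" using that unfolding is_prod_def by (meson order_trans)
    then have "\<forall>y\<in>Y. q \<in> f y" using key[OF aw(1,2)] aw(3) by simp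
    then show "q \<in> V \<inter> (\<Inter>y\<in>Y. f y)" using fV \<open>q \<in> f m\<close> by blast
  next
    fix q assume q: "q \<in> V \<inter> (\<Inter>y\<in>Y. f y)"
    then obtain a w where aw: "is_atom a" "word_ok w" "q = bseq a \<circ> word_perm w" using Vcases by blast
    have "\<forall>y\<in>Y. word_term s (rev w) a \<le> y" using key[OF aw(1,2)] aw(3) q by simp
    then have "word_term s (rev w) a \<le> m" using that unfolding is_prod_def by blast
    then show "q \<in> f m" using key[OF aw(1,2)] aw(3) by simp
  qed
  have un: "(\<Union>x\<in>{x. is_atom x}. f x) = V"
  proof (intro equalityI subsetI)
    fix q assume "q \<in> (\<Union>x\<in>{x. is_atom x}. f x)" then show "q \<in> V" using fV by blast
  next
    fix q assume "q \<in> V"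
    then obtain a w where aw: "is_atom a" "word_ok w" "q = bseq a \<circ> word_perm w" using Vcases by blast
    have "is_atom (word_term s (rev w) a)" using wt_atom[OF TA wok_rev[OF aw(2)] aw(1)] .
    moreover have "q \<in> f (word_term s (rev w) a)" using key[OF aw(1,2)] aw(3) by simp
    ultimately show "q \<in> (\<Union>x\<in>{x. is_atom x}. f x)" by blast
  qed
  show ?thesis
  proof (rule exI[of _ V], rule exI[of _ f], intro conjI impI allI)
    show "\<exists>U p. (\<forall>i. p i \<in> U) \<and> V \<subseteq> weak_space U p"
      by (rule exI[of _ UNIV], rule exI[of _ "\<lambda>k. {(bot, k, 0)}"]) (simp add: weak)
  qed (use perm hom injf prod un in auto)
qed

end
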